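(* Let $q>1$ and let $\rho$ be a positive $2\pi$-periodic $C^2$ function with $(\ln\rho)''(t)<\sqrt{q}/(1+\sqrt{q})$ for all $t$; let $y(\theta)=\rho(\theta)(\cos\theta,\sin\theta)^T$, and let $\phi$ be a continuous function on $\mathbb{S}^1$. With the notation in the context, suppose there is a sequence of positive numbers $k_n\to\infty$ such that for every $\eta\in\mathbb{S}^1$ and every integer $N\ge0$, $$\sum_{j,l=1}^2\big(f_\eta^{j,l}\big)^N\frac{\phi(\mathcal{T}_{j,l}\eta+\delta_{l,2}\pi)\,\Psi_\eta^{j,l}}{|\det D^2\psi_\eta^{j,l}|^{1/2}}\,e^{\mathrm{i}\pi\frac{(-1)^l(1-(-1)^j)}{4}+\mathrm{i}k_n\psi_\eta^{j,l}}\longrightarrow0\quad(n\to\infty).$$ Then for every $\eta\in\mathbb{S}^1$, the set $\Lambda=\Lambda_\eta=\{(j,l)\in\{1,2\}^2:\phi(\mathcal{T}_{j,l}\eta+\delta_{l,2}\pi)\neq0\}$ satisfies $\#\Lambda\in\{0,2,3,4\}$, and moreover: if $\#\Lambda\in\{2,3\}$, then $f_\eta^{j,l}$ takes the same value for all $(j,l)\in\Lambda$; if $\#\Lambda=4$, then either $f_\eta^{j,l}$ takes the same value for all $(j,l)\in\Lambda$, or $\Lambda=\Lambda_1\cup\Lambda_2$ with $\#\Lambda_1=\#\Lambda_2=2$, $f_\eta^{j,l}$ constant on each $\Lambda_p$, and for each $p=1,2$ and every integer $N\ge0$ the sum above restricted to $(j,l)\in\Lambda_p$ tends to $0$ as 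$n\to\infty$.
   Context: Identify $\mathbb{S}^1$ with $\mathbb{R}/(2\pi\mathbb{Z})$ via $\theta\mapsto(\cos\theta,\sin\theta)^T$; $\theta_\eta$ is the angle of $\eta$, and $x^\perp=(-x_2,x_1)^T$. For $\eta\in\mathbb{S}^1$ and $\xi=(\cos\theta_\xi,\sin\theta_\xi)$: $\psi_\eta(\theta,\theta_\xi)=(\sqrt{q}\eta+\xi)\cdot y(\theta)$, $\Psi_\eta(\theta,\theta_\xi)=-(\sqrt{q}\eta-\xi)\cdot y'(\theta)^\perp$, and $D^2\psi_\eta(\theta,\theta_\xi)=\begin{bmatrix}(\sqrt{q}\eta+\xi)\cdot y''(\theta)&\xi^\perp\cdot y'(\theta)\\ \xi^\perp\cdot y'(\theta)&-\xi\cdot y(\theta)\end{bmatrix}$. For $l\in\{1,2\}$ let $\eta_l=(-1)^{l-1}\eta$, $\theta_q=\arccos(1/\sqrt q)$, $h(\theta)=\frac{\sqrt q\sin\theta}{\sqrt q\cos\theta+1}$; the equation $(\ln\rho)'(\theta)=h(\theta-\theta_{\eta_l})$ has exactly two solutions in $\mathbb{R}/(2\pi\mathbb{Z})$: $\mathcal{T}_{1,l}\eta$ with $\theta-\theta_{\eta_l}\in(\theta_q-\pi,\pi-\theta_q)$ and $\mathcal{T}_{2,l}\eta$ with $\theta-\theta_{\eta_l}\in(\pi-\theta_q,\pi+\theta_q)$ (mod $2\pi$). Set $\{\Psi_\eta^{j,l},\psi_\eta^{j,l},D^2\psi_\eta^{j,l}\}=\{\Psi_\eta,\psi_\eta,D^2\psi_\eta\}(\mathcal{T}_{j,l}\eta,\mathcal{T}_{j,l}\eta+\delta_{l,2}\pi)$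 (these determinants are nonzero) and $f_\eta^{j,l}=\rho(\mathcal{T}_{j,l}\eta)\sin(\mathcal{T}_{j,l}\eta-\theta_\eta)$; $\delta_{l,2}$ is the Kronecker delta and $\phi$ is viewed as a function of the angle. *)

theory Defs
  imports "HOL-Analysis.Analysis"
begin

text \<open>Points of the unit circle are parametrised by their angle; vectors of R^2 are
  represented as elements of real \<times> real (with the standard inner product).\<close>

definition uvec :: "real \<Rightarrow> real \<times> real" where
  "uvec t = (cos t, sin t)"

definition perp :: "real \<times> real \<Rightarrow> real \<times> real" where
  "perp x = (- snd x, fst x)"

definition ycurve :: "(real \<Rightarrow> real) \<Rightarrow> real \<Rightarrow> real \<times> real" where
  "ycurve \<rho> \<theta> = (\<rho> \<theta> * cos \<theta>, \<rho> \<theta> * sin \<theta>)"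

definition ycurve' :: "(real \<Rightarrow> real) \<Rightarrow> real \<Rightarrow> real \<times> real" where
  "ycurve' \<rho> \<theta> = vector_derivative (ycurve \<rho>) (at \<theta>)"

definition ycurve'' :: "(real \<Rightarrow> real) \<Rightarrow> real \<Rightarrow> real \<times> real" where
  "ycurve'' \<rho> \<theta> = vector_derivative (ycurve' \<rho>) (at \<theta>)"

text \<open>psi_eta(theta, theta_xi), Psi_eta(theta, theta_xi), det D^2 psi_eta(theta, theta_xi);
  the direction eta is given by its angle te.\<close>

definition psi :: "real \<Rightarrow> (real \<Rightarrow> real) \<Rightarrow> real \<Rightarrow> real \<Rightarrow> real \<Rightarrow> real" where
  "psi q \<rho> te \<theta> t\<xi> = (sqrt q *\<^sub>R uvec te + uvec t\<xi>) \<bullet> ycurve \<rho> \<theta>"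

definition Psi :: "real \<Rightarrow> (real \<Rightarrow> real) \<Rightarrow> real \<Rightarrow> real \<Rightarrow> real \<Rightarrow> real" where
  "Psi q \<rho> te \<theta> t\<xi> = - ((sqrt q *\<^sub>R uvec te - uvec t\<xi>) \<bullet> perp (ycurve' \<rho> \<theta>))"

definition detD2psi :: "real \<Rightarrow> (real \<Rightarrow> real) \<Rightarrow> real \<Rightarrow> real \<Rightarrow> real \<Rightarrow> real" where
  "detD2psi q \<rho> te \<theta> t\<xi> =
     ((sqrt q *\<^sub>R uvec te + uvec t\<xi>) \<bullet> ycurve'' \<rho> \<theta>) * (- (uvec t\<xi> \<bullet> ycurve \<rho> \<theta>))
     - (perp (uvec t\<xi>) \<bullet> ycurve' \<rho> \<theta>) ^ 2"

definition theta_q :: "real \<Rightarrow> real" where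
  "theta_q q = arccos (1 / sqrt q)"

definition hfun :: "real \<Rightarrow> real \<Rightarrow> real" where
  "hfun q \<theta> = sqrt q * sin \<theta> / (sqrt q * cos \<theta> + 1)"

text \<open>Angle of eta_l = (-1)^(l-1) eta, for l in {1,2}.\<close>

definition ang_l :: "real \<Rightarrow> nat \<Rightarrow> real" where
  "ang_l te l = te + (if l = 2 then pi else 0)"

text \<open>T_{j,l} eta: the solution of (ln rho)'(theta) = h(theta - theta_{eta_l}), taken
  as the representative with theta - theta_{eta_l} in (theta_q - pi, pi - theta_q) for j = 1,
  and in (pi - theta_q, pi + theta_q) for j = 2.  All quantities below are 2 pi periodic in
  the angle, so the choice of representative is immaterial.\<close>

definition Tmap :: "real \<Rightarrow> (real \<Rightarrow> real) \<Rightarrow> real \<Rightarrow> nat \<Rightarrow> nat \<Rightarrow> real" where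
  "Tmap q \<rho> te j l =
     (THE \<theta>. (if j = 1 then \<theta> - ang_l te l \<in> {theta_q q - pi <..< pi - theta_q q}
              else \<theta> - ang_l te l \<in> {pi - theta_q q <..< pi + theta_q q})
           \<and> deriv (\<lambda>t. ln (\<rho> t)) \<theta> = hfun q (\<theta> - ang_l te l))"

definition delta2 :: "nat \<Rightarrow> real" where
  "delta2 l = (if l = 2 then 1 else 0)"

definition fval :: "real \<Rightarrow> (real \<Rightarrow> real) \<Rightarrow> real \<Rightarrow> nat \<Rightarrow> nat \<Rightarrow> real" where
  "fval q \<rho> te j l = \<rho> (Tmap q \<rho> te j l) * sin (Tmap q \<rho> te j l - te)"

definition summand ::
  "real \<Rightarrow> (real \<Rightarrow> real) \<Rightarrow> (real \<Rightarrow> complex) \<Rightarrow> real \<Rightarrow> nat \<Rightarrow> real \<Rightarrow> nat \<Rightarrow> nat \<Rightarrow> complex" where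
  "summand q \<rho> \<phi> te N kn j l =
     (let T = Tmap q \<rho> te j l; T' = T + delta2 l * pi in
      complex_of_real (fval q \<rho> te j l ^ N)
      * \<phi> T' * complex_of_real (Psi q \<rho> te T T')
      / complex_of_real (sqrt \<bar>detD2psi q \<rho> te T T'\<bar>)
      * exp (\<i> * complex_of_real (pi * (-1) ^ l * (1 - (-1) ^ j) / 4 + kn * psi q \<rho> te T T')))"

definition Lambda :: "real \<Rightarrow> (real \<Rightarrow> real) \<Rightarrow> (real \<Rightarrow> complex) \<Rightarrow> real \<Rightarrow> (nat \<times> nat) set" where
  "Lambda q \<rho> \<phi> te =
     {(j, l). j \<in> {1, 2} \<and> l \<in> {1, 2} \<and> \<phi> (Tmap q \<rho> te j l + delta2 l * pi) \<noteq> 0}"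

end

theory Submission
  imports Defs
begin


lemma ln_deriv_eq:
  assumes rho_pos: "\<And>t. \<rho> t > (0::real)"
    and rho_d1: "\<And>t. (\<rho> has_real_derivative \<rho>' t) (at t)"
  shows "deriv (\<lambda>s. ln (\<rho> s)) = (\<lambda>t. \<rho>' t / \<rho> t)"
proof
  fix t
  have "((\<lambda>s. ln (\<rho> s)) has_real_derivative (1 / \<rho> t * \<rho>' t)) (at t)"
    by (rule DERIV_chain2[OF DERIV_ln_divide rho_d1]) (use rho_pos in auto)
  then show "deriv (\<lambda>s. ln (\<rho> s)) t = \<rho>' t / \<rho> t" by (simp add: DERIV_imp_deriv)
qed

lemma g_deriv:
  assumes rho_pos: "\<And>t. \<rho> t > (0::real)"
    and rho_d1: "\<And>t. (\<rho> has_real_derivative \<rho>' t) (at t)"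
    and rho_d2: "\<And>t. (\<rho>' has_real_derivative \<rho>'' t) (at t)"
  shows "((\<lambda>t. \<rho>' t / \<rho> t) has_real_derivative ((\<rho>'' t * \<rho> t - \<rho>' t * \<rho>' t) / (\<rho> t)^2)) (at t)"
  using DERIV_divide[OF rho_d2 rho_d1, of t] rho_pos[of t]
  by (simp add: power2_eq_square)

lemma ycurve'_eq:
  assumes rho_d1: "\<And>t. (\<rho> has_real_derivative \<rho>' t) (at t)"
  shows "ycurve' \<rho> = (\<lambda>\<theta>. (\<rho>' \<theta> * cos \<theta> - \<rho> \<theta> * sin \<theta>, \<rho>' \<theta> * sin \<theta> + \<rho> \<theta> * cos \<theta>))"
proof
  fix \<theta>
  have "(ycurve \<rho> has_vector_derivative (\<rho>' \<theta> * cos \<theta> - \<rho> \<theta> * sin \<theta>, \<rho>' \<theta> * sin \<theta> + \<rho> \<theta> * cos \<theta>)) (at \<theta>)"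
    unfolding ycurve_def
    apply (rule has_vector_derivative_Pair)
    unfolding has_real_derivative_iff_has_vector_derivative[symmetric]
     apply (rule derivative_eq_intros rho_d1 | simp)+
    done
  then show "ycurve' \<rho> \<theta> = (\<rho>' \<theta> * cos \<theta> - \<rho> \<theta> * sin \<theta>, \<rho>' \<theta> * sin \<theta> + \<rho> \<theta> * cos \<theta>)" unfolding ycurve'_def by (rule vector_derivative_at)
qed

lemma ycurve''_eq:
  assumes rho_d1: "\<And>t. (\<rho> has_real_derivative \<rho>' t) (at t)"
    and rho_d2: "\<And>t. (\<rho>' has_real_derivative \<rho>'' t) (at t)"
  shows "ycurve'' \<rho> = (\<lambda>\<theta>. ((\<rho>'' \<theta> - \<rho> \<theta>) * cos \<theta> - 2 * \<rho>' \<theta> * sin \<theta>, (\<rho>'' \<theta> - \<rho> \<theta>) * sin \<theta> + 2 * \<rho>' \<theta> * cos \<theta>))"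
proof
  fix \<theta>
  have "((\<lambda>\<theta>. (\<rho>' \<theta> * cos \<theta> - \<rho> \<theta> * sin \<theta>, \<rho>' \<theta> * sin \<theta> + \<rho> \<theta> * cos \<theta>)) has_vector_derivative ((\<rho>'' \<theta> - \<rho> \<theta>) * cos \<theta> - 2 * \<rho>' \<theta> * sin \<theta>, (\<rho>'' \<theta> - \<rho> \<theta>) * sin \<theta> + 2 * \<rho>' \<theta> * cos \<theta>)) (at \<theta>)"
    apply (rule has_vector_derivative_Pair)
    unfolding has_real_derivative_iff_has_vector_derivative[symmetric]
     apply (rule derivative_eq_intros rho_d1 rho_d2 | simp)+
     apply (simp add: algebra_simps)
    apply (rule derivative_eq_intros rho_d1 rho_d2 | simp)+
    apply (simp add: algebra_simps)
    done
  then show "ycurve'' \<rho> \<theta> = ((\<rho>'' \<theta> - \<rho> \<theta>) * cos \<theta> - 2 * \<rho>' \<theta> * sin \<theta>, (\<rho>'' \<theta> - \<rho> \<theta>) * sin \<theta> + 2 * \<rho>' \<theta> * cos \<theta>)" unfolding ycurve''_def ycurve'_eq[OF rho_d1] by (rule vector_derivative_at)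
qed

lemma hfun_deriv:
  assumes "q \<ge> 0" "sqrt q * cos s + 1 \<noteq> 0"
  shows "(hfun q has_real_derivative (sqrt q * (sqrt q + cos s) / (sqrt q * cos s + 1)^2)) (at s)"
proof -
  have "((\<lambda>s. sqrt q * sin s / (sqrt q * cos s + 1)) has_real_derivative
     ((sqrt q * cos s) * (sqrt q * cos s + 1) - sqrt q * sin s * (- sqrt q * sin s)) / (sqrt q * cos s + 1)^2) (at s)"
    using assms by (auto intro!: derivative_eq_intros simp: power2_eq_square)
  moreover have "(sqrt q * cos s) * (sqrt q * cos s + 1) - sqrt q * sin s * (- sqrt q * sin s) = sqrt q * (sqrt q + cos s)"
  proof -
    define r where "r = sqrt q"
    have e: "r * r = q" using assms unfolding r_def by simp
    have "(r * cos s) * (r * cos s + 1) - r * sin s * (- r * sin s)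
       = r * r * ((sin s)^2 + (cos s)^2) + r * cos s" by algebra
    also have "\<dots> = r * (r + cos s)" by (simp add: algebra_simps)
    finally show ?thesis unfolding r_def .
  qed
  ultimately show ?thesis unfolding hfun_def[abs_def] by simp
qed

lemma key_ineq:
  fixes r c :: real
  assumes "r > 1" "-1 \<le> c" "c \<le> 1"
  shows "(r * c + 1)^2 * (r / (1 + r)) \<le> r * (r + c)"
proof -
  have f: "(c + r) * (1 + r) - (r * c + 1)^2 = (1 - c) * (r^2 * c + r^2 + r - 1)"
    by (simp add: algebra_simps power2_eq_square)
  have "r^2 * c + r^2 + r - 1 \<ge> 0"
  proof -
    have "r^2 * c \<ge> r^2 * (-1)" using assms by (intro mult_left_mono) auto
    then show ?thesis using assms by simp
  qed
  then have "(r * c + 1)^2 \<le> (c + r) * (1 + r)" using f assms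
    by (smt (verit) mult_nonneg_nonneg)
  then have "(r * c + 1)^2 * (r / (1 + r)) \<le> (c + r) * (1 + r) * (r / (1 + r))"
    using assms by (intro mult_right_mono) auto
  also have "\<dots> = r * (r + c)" using assms by (simp add: field_simps)
  finally show ?thesis .
qed

lemma exist_unique:
  fixes g L :: "real \<Rightarrow> real" and q lo hi a :: real
  assumes q: "q > 1"
    and g_d: "\<And>t. (g has_real_derivative L t) (at t)"
    and L_bd: "\<And>t. L t < sqrt q / (1 + sqrt q)"
    and lohi: "lo < hi"
    and Dnz: "\<And>s. lo < s \<Longrightarrow> s < hi \<Longrightarrow> sqrt q * cos s + 1 \<noteq> 0"
    and Dlo: "sqrt q * cos lo + 1 = 0" and Dhi: "sqrt q * cos hi + 1 = 0"
    and sgn: "sin lo * sin hi < 0"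
  shows "\<exists>!\<theta>. \<theta> - a \<in> {lo<..<hi} \<and> g \<theta> = hfun q (\<theta> - a)"
proof -
  define r where "r = sqrt q"
  have r1: "r > 1" using q unfolding r_def by simp
  define G where "G s = g (a + s) * (r * cos s + 1) - r * sin s" for s
  have gc: "continuous_on UNIV g"
    using g_d by (meson DERIV_isCont continuous_at_imp_continuous_on)
  have Gc: "continuous_on {lo..hi} G"
    unfolding G_def
    by (intro continuous_intros continuous_on_compose2[OF gc]) auto
  have Glo: "G lo = - r * sin lo" using Dlo unfolding G_def r_def by simp
  have Ghi: "G hi = - r * sin hi" using Dhi unfolding G_def r_def by simp
  have GG: "G lo * G hi < 0"
  proof -
    have "G lo * G hi = r * r * (sin lo * sin hi)" using Glo Ghi by simp
    moreover have "r * r > 0" using r1 by simp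
    ultimately show ?thesis using sgn by (simp add: mult_pos_neg)
  qed
  obtain s0 where s0: "lo \<le> s0" "s0 \<le> hi" "G s0 = 0"
  proof (cases "G lo \<le> 0")
    case True
    then have "G hi \<ge> 0" using GG by (smt (verit) mult_nonpos_nonpos)
    then show ?thesis using IVT'[of G lo 0 hi] True lohi Gc that by auto
  next
    case False
    then have "G hi \<le> 0" using GG by (smt (verit) mult_pos_pos)
    then show ?thesis using IVT2'[of G hi 0 lo] False lohi Gc that by auto
  qed
  have "s0 \<noteq> lo" using s0 GG by auto
  moreover have "s0 \<noteq> hi" using s0 GG by auto
  ultimately have s0i: "lo < s0" "s0 < hi" using s0 by auto
  have D0: "r * cos s0 + 1 \<noteq> 0" using Dnz[OF s0i] unfolding r_def .
  have ex: "(a + s0) - a \<in> {lo<..<hi} \<and> g (a + s0) = hfun q ((a + s0) - a)"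
    using s0i s0(3) D0 unfolding G_def hfun_def r_def by (simp add: field_simps)
  have uniq: False if t1: "t1 - a \<in> {lo<..<hi}" "g t1 = hfun q (t1 - a)"
      and t2: "t2 - a \<in> {lo<..<hi}" "g t2 = hfun q (t2 - a)" and lt: "t1 < t2" for t1 t2
  proof -
    define F where "F t = g t - hfun q (t - a)" for t
    have "F t1 > F t2"
    proof (rule DERIV_neg_imp_decreasing[OF lt])
      fix t assume t: "t1 \<le> t" "t \<le> t2"
      then have ti: "lo < t - a" "t - a < hi" using t1 t2 by auto
      have Dt: "sqrt q * cos (t - a) + 1 \<noteq> 0" using Dnz[OF ti] .
      have hd: "((\<lambda>t. hfun q (t - a)) has_real_derivative
          (sqrt q * (sqrt q + cos (t - a)) / (sqrt q * cos (t - a) + 1)^2)) (at t)"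
        using DERIV_chain2[OF hfun_deriv[OF _ Dt] DERIV_diff[OF DERIV_ident DERIV_const[of a]]] q
        by simp
      have "(sqrt q * cos (t - a) + 1)^2 * (sqrt q / (1 + sqrt q)) \<le> sqrt q * (sqrt q + cos (t - a))"
        using key_ineq[of "sqrt q" "cos (t - a)"] q by simp
      then have "sqrt q / (1 + sqrt q) \<le> sqrt q * (sqrt q + cos (t - a)) / (sqrt q * cos (t - a) + 1)^2"
        using Dt by (simp add: pos_le_divide_eq mult.commute)
      then have "L t - sqrt q * (sqrt q + cos (t - a)) / (sqrt q * cos (t - a) + 1)^2 < 0"
        using L_bd[of t] by linarith
      moreover have "DERIV F t :> L t - sqrt q * (sqrt q + cos (t - a)) / (sqrt q * cos (t - a) + 1)^2"
        unfolding F_def[abs_def] using DERIV_diff[OF g_d hd] .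
      ultimately show "\<exists>y. DERIV F t :> y \<and> y < 0" by blast
    qed
    then show False using t1 t2 unfolding F_def by simp
  qed
  show ?thesis
    by (rule ex1I[of _ "a + s0"], rule ex) (metis uniq ex linorder_neqE_linordered_idom)
qed

lemma interval_facts:
  fixes q :: real and j :: nat
  assumes q: "q > 1"
  shows "\<exists>lo hi. (\<forall>s. (if j = 1 then s \<in> {theta_q q - pi <..< pi - theta_q q}
                                else s \<in> {pi - theta_q q <..< pi + theta_q q}) \<longleftrightarrow> lo < s \<and> s < hi)
          \<and> lo < hi \<and> sqrt q * cos lo + 1 = 0 \<and> sqrt q * cos hi + 1 = 0 \<and> sin lo * sin hi < 0
          \<and> (\<forall>s. lo < s \<and> s < hi \<longrightarrow> sqrt q * cos s + 1 \<noteq> 0)"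
proof -
  define r where "r = sqrt q"
  have r1: "r > 1" using q unfolding r_def by simp
  define tq where "tq = theta_q q"
  have ir: "0 < 1 / r" "1 / r < 1" using r1 by auto
  have ctq: "cos tq = 1 / r" unfolding tq_def theta_q_def r_def[symmetric] using ir by (intro cos_arccos) linarith+
  have tqb: "0 < tq" "tq < pi" unfolding tq_def theta_q_def r_def[symmetric]
    using arccos_lt_bounded[of "1/r"] ir by auto
  have stq: "sin tq > 0" using tqb by (simp add: sin_gt_zero)
  have rc: "r * cos tq = 1" using ctq r1 by simp
  show ?thesis
  proof (cases "j = 1")
    case True
    show ?thesis
    proof (rule exI[of _ "tq - pi"], rule exI[of _ "pi - tq"], intro conjI allI impI)
      fix s
      show "(if j = 1 then s \<in> {theta_q q - pi <..< pi - theta_q q}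
                                else s \<in> {pi - theta_q q <..< pi + theta_q q}) \<longleftrightarrow> tq - pi < s \<and> s < pi - tq"
        using True unfolding tq_def by auto
    next
      show "tq - pi < pi - tq" using tqb by simp
    next
      show "sqrt q * cos (tq - pi) + 1 = 0" using rc unfolding r_def by (simp add: cos_diff)
    next
      show "sqrt q * cos (pi - tq) + 1 = 0" using rc unfolding r_def by (simp add: cos_diff)
    next
      show "sin (tq - pi) * sin (pi - tq) < 0" using stq by (simp add: sin_diff)
    next
      fix s assume s: "tq - pi < s \<and> s < pi - tq"
      have "cos (pi - tq) < cos \<bar>s\<bar>"
        using s tqb by (intro cos_monotone_0_pi) auto
      then have "cos s > - 1 / r" using ctq by (simp add: cos_diff)
      then have "r * cos s > -1" using r1 by (simp add: field_simps)
      then show "sqrt q * cos s + 1 \<noteq> 0" unfolding r_def by simp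
    qed
  next
    case False
    show ?thesis
    proof (rule exI[of _ "pi - tq"], rule exI[of _ "pi + tq"], intro conjI allI impI)
      fix s
      show "(if j = 1 then s \<in> {theta_q q - pi <..< pi - theta_q q}
                                else s \<in> {pi - theta_q q <..< pi + theta_q q}) \<longleftrightarrow> pi - tq < s \<and> s < pi + tq"
        using False unfolding tq_def by auto
    next
      show "pi - tq < pi + tq" using tqb by simp
    next
      show "sqrt q * cos (pi - tq) + 1 = 0" using rc unfolding r_def by (simp add: cos_diff)
    next
      show "sqrt q * cos (pi + tq) + 1 = 0" using rc unfolding r_def by (simp add: cos_add)
    next
      show "sin (pi - tq) * sin (pi + tq) < 0" using stq by (simp add: sin_diff sin_add)
    next
      fix s assume s: "pi - tq < s \<and> s < pi + tq"
      have "cos tq < cos \<bar>s - pi\<bar>"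
        using s tqb by (intro cos_monotone_0_pi) auto
      moreover have "cos \<bar>s - pi\<bar> = - cos s" by (simp add: cos_diff)
      ultimately have "cos s < - 1 / r" using ctq by simp
      then have "r * cos s < -1" using r1 by (simp add: field_simps)
      then show "sqrt q * cos s + 1 \<noteq> 0" unfolding r_def by simp
    qed
  qed
qed



lemma Psi_formula:
  assumes rho_d1: "\<And>t. (\<rho> has_real_derivative \<rho>' t) (at t)" and l: "l \<in> {1, 2::nat}"
  shows "Psi q \<rho> te T (T + delta2 l * pi) = (if l = 1 then 1 else -1) *
     (sqrt q * \<rho>' T * sin (T - ang_l te l) + sqrt q * \<rho> T * cos (T - ang_l te l) - \<rho> T)"
proof -
  have sc: "cos T * (cos T * \<rho> T) + sin T * (sin T * \<rho> T) = \<rho> T"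
    proof -
    have "cos T * (cos T * \<rho> T) + sin T * (sin T * \<rho> T) = ((sin T)^2 + (cos T)^2) * \<rho> T" by algebra
    then show ?thesis by simp
  qed
  show ?thesis
  using l unfolding Psi_def ycurve'_eq[OF rho_d1] uvec_def perp_def delta2_def ang_l_def
  by (auto simp: sin_diff cos_diff sin_add cos_add algebra_simps sc)
qed

lemma det_formula:
  assumes rho_d1: "\<And>t. (\<rho> has_real_derivative \<rho>' t) (at t)"
    and rho_d2: "\<And>t. (\<rho>' has_real_derivative \<rho>'' t) (at t)" and l: "l \<in> {1, 2::nat}"
  shows "detD2psi q \<rho> te T (T + delta2 l * pi) = - \<rho> T *
     (sqrt q * (\<rho>'' T - \<rho> T) * cos (T - ang_l te l) - 2 * sqrt q * \<rho>' T * sin (T - ang_l te l) + \<rho>'' T)"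
proof -
  have sc: "sin T * sin T + cos T * cos T = 1" using sin_cos_squared_add[of T] by (simp add: power2_eq_square)
  have "detD2psi q \<rho> te T (T + delta2 1 * pi) = - \<rho> T *
     (sqrt q * (\<rho>'' T - \<rho> T) * cos (T - ang_l te 1) - 2 * sqrt q * \<rho>' T * sin (T - ang_l te 1) + \<rho>'' T)"
    unfolding detD2psi_def ycurve'_eq[OF rho_d1] ycurve''_eq[OF rho_d1 rho_d2] ycurve_def uvec_def perp_def delta2_def ang_l_def
    apply (simp add: sin_diff cos_diff sin_add cos_add)
    using sc by algebra
  moreover have "detD2psi q \<rho> te T (T + delta2 2 * pi) = - \<rho> T *
     (sqrt q * (\<rho>'' T - \<rho> T) * cos (T - ang_l te 2) - 2 * sqrt q * \<rho>' T * sin (T - ang_l te 2) + \<rho>'' T)"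
    unfolding detD2psi_def ycurve'_eq[OF rho_d1] ycurve''_eq[OF rho_d1 rho_d2] ycurve_def uvec_def perp_def delta2_def ang_l_def
    apply (simp add: sin_diff cos_diff sin_add cos_add)
    using sc by algebra
  ultimately show ?thesis using l by auto
qed

lemma Tmap_prop:
  assumes q: "q > 1"
    and rho_pos: "\<And>t. \<rho> t > 0"
    and rho_d1: "\<And>t. (\<rho> has_real_derivative \<rho>' t) (at t)"
    and rho_d2: "\<And>t. (\<rho>' has_real_derivative \<rho>'' t) (at t)"
    and convex: "\<And>t. deriv (deriv (\<lambda>s. ln (\<rho> s))) t < sqrt q / (1 + sqrt q)"
  shows "\<rho>' (Tmap q \<rho> te j l) / \<rho> (Tmap q \<rho> te j l) = hfun q (Tmap q \<rho> te j l - ang_l te l)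
     \<and> sqrt q * cos (Tmap q \<rho> te j l - ang_l te l) + 1 \<noteq> 0"
proof -
  obtain lo hi where iv: "\<forall>s. (if j = 1 then s \<in> {theta_q q - pi <..< pi - theta_q q}
                                else s \<in> {pi - theta_q q <..< pi + theta_q q}) \<longleftrightarrow> lo < s \<and> s < hi"
    "lo < hi" "sqrt q * cos lo + 1 = 0" "sqrt q * cos hi + 1 = 0" "sin lo * sin hi < 0"
    "\<forall>s. lo < s \<and> s < hi \<longrightarrow> sqrt q * cos s + 1 \<noteq> 0"
    using interval_facts[OF q, of j] by blast
  have gd: "deriv (\<lambda>s. ln (\<rho> s)) = (\<lambda>t. \<rho>' t / \<rho> t)" by (rule ln_deriv_eq[OF rho_pos rho_d1])
  define L where "L t = (\<rho>'' t * \<rho> t - \<rho>' t * \<rho>' t) / (\<rho> t)^2" for t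
  have Ld: "\<And>t. ((\<lambda>t. \<rho>' t / \<rho> t) has_real_derivative L t) (at t)"
    unfolding L_def by (rule g_deriv[OF rho_pos rho_d1 rho_d2])
  have Lb: "\<And>t. L t < sqrt q / (1 + sqrt q)"
    using convex unfolding gd using DERIV_imp_deriv[OF Ld] by metis
  define a where "a = ang_l te l"
  have eu: "\<exists>!\<theta>. \<theta> - a \<in> {lo<..<hi} \<and> \<rho>' \<theta> / \<rho> \<theta> = hfun q (\<theta> - a)"
    by (rule exist_unique[OF q Ld Lb iv(2) _ iv(3) iv(4) iv(5)]) (use iv(6) in auto)
  have Peq: "(\<lambda>\<theta>. (if j = 1 then \<theta> - ang_l te l \<in> {theta_q q - pi <..< pi - theta_q q}
              else \<theta> - ang_l te l \<in> {pi - theta_q q <..< pi + theta_q q})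
           \<and> deriv (\<lambda>t. ln (\<rho> t)) \<theta> = hfun q (\<theta> - ang_l te l))
     = (\<lambda>\<theta>. \<theta> - a \<in> {lo<..<hi} \<and> \<rho>' \<theta> / \<rho> \<theta> = hfun q (\<theta> - a))"
    unfolding gd a_def using iv(1) by auto
  have T: "Tmap q \<rho> te j l = (THE \<theta>. \<theta> - a \<in> {lo<..<hi} \<and> \<rho>' \<theta> / \<rho> \<theta> = hfun q (\<theta> - a))"
    unfolding Tmap_def Peq ..
  have "Tmap q \<rho> te j l - a \<in> {lo<..<hi} \<and> \<rho>' (Tmap q \<rho> te j l) / \<rho> (Tmap q \<rho> te j l) = hfun q (Tmap q \<rho> te j l - a)"
    unfolding T by (rule theI'[OF eu])
  then show ?thesis using iv(6) unfolding a_def by auto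
qed

lemma Psi_nz:
  fixes p p1 s q :: real
  assumes q: "q > 1" and p: "p > 0" and eq: "p1 / p = hfun q s" and D: "sqrt q * cos s + 1 \<noteq> 0"
  shows "sqrt q * p1 * sin s + sqrt q * p * cos s - p \<noteq> 0"
proof -
  define r where "r = sqrt q"
  have rr: "r * r = q" "r > 1" using q unfolding r_def by auto
  define D' where "D' = r * cos s + 1"
  have D'nz: "D' \<noteq> 0" using D unfolding D'_def r_def .
  have p1: "p1 = p * r * sin s / D'" using eq p unfolding hfun_def D'_def r_def by (simp add: field_simps)
  have "(r * p1 * sin s + r * p * cos s - p) * D' = p * (r * r * ((sin s)^2 + (cos s)^2) - 1)"
  proof -
    have a: "r * p1 * sin s * D' = p * r * r * (sin s)^2" unfolding p1 using D'nz by (simp add: field_simps power2_eq_square)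
    have "(r * p1 * sin s + r * p * cos s - p) * D' = r * p1 * sin s * D' + (r * p * cos s - p) * (r * cos s + 1)"
      unfolding D'_def by algebra
    also have "\<dots> = p * (r * r * ((sin s)^2 + (cos s)^2) - 1)" unfolding a by algebra
    finally show ?thesis .
  qed
  also have "\<dots> = p * (q - 1)" using rr by simp
  finally have "(r * p1 * sin s + r * p * cos s - p) * D' \<noteq> 0" using p q by simp
  then show ?thesis unfolding r_def by auto
qed

lemma det_nz:
  fixes p p1 p2 s q :: real
  assumes q: "q > 1" and p: "p > 0" and eq: "p1 / p = hfun q s" and D: "sqrt q * cos s + 1 \<noteq> 0"
    and cv: "(p2 * p - p1 * p1) / p^2 < sqrt q / (1 + sqrt q)"
  shows "sqrt q * (p2 - p) * cos s - 2 * sqrt q * p1 * sin s + p2 \<noteq> 0"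
proof -
  define r where "r = sqrt q"
  have rr: "r * r = q" "r > 1" using q unfolding r_def by auto
  define D' where "D' = r * cos s + 1"
  have D'nz: "D' \<noteq> 0" using D unfolding D'_def r_def .
  define u where "u = p1 / p"
  define v where "v = p2 / p"
  have u: "u = r * sin s / D'" using eq unfolding u_def hfun_def D'_def r_def by simp
  have vu: "v - u * u < r / (1 + r)" using cv p unfolding u_def v_def r_def
    by (simp add: field_simps power2_eq_square)
  have E: "r * (v - 1) * cos s - 2 * r * u * sin s + v = (D'^2 * (v - u * u) - r * (cos s + r)) / D'"
  proof -
    have "(r * (v - 1) * cos s - 2 * r * u * sin s + v) * D' = D'^2 * (v - u * u) - r * (cos s + r)"
    proof -
      have "(r * (v - 1) * cos s - 2 * r * u * sin s + v) * D' - (D'^2 * (v - u * u) - r * (cos s + r))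
         = r * r * (1 - ((sin s)^2 + (cos s)^2)) + (u * D' - r * sin s) * (u * D' - r * sin s)"
        unfolding D'_def by algebra
      also have "u * D' - r * sin s = 0" using u D'nz by simp
      finally show ?thesis by simp
    qed
    then show ?thesis using D'nz by (simp add: field_simps)
  qed
  have cb: "-1 \<le> cos s" "cos s \<le> 1" by auto
  have K: "D'^2 * (r / (1 + r)) \<le> r * (r + cos s)"
    using key_ineq[OF rr(2) cb] unfolding D'_def .
  have "D'^2 > 0" using D'nz by simp
  then have "D'^2 * (v - u * u) < D'^2 * (r / (1 + r))" using vu by (intro mult_strict_left_mono)
  then have "D'^2 * (v - u * u) - r * (cos s + r) < 0" using K by (simp add: algebra_simps)
  then have "r * (v - 1) * cos s - 2 * r * u * sin s + v \<noteq> 0" unfolding E using D'nz by simp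
  moreover have "sqrt q * (p2 - p) * cos s - 2 * sqrt q * p1 * sin s + p2 = p * (r * (v - 1) * cos s - 2 * r * u * sin s + v)"
    unfolding u_def v_def r_def using p by (simp add: field_simps)
  ultimately show ?thesis using p by simp
qed



lemma group_lim:
  fixes I :: "'a set" and f :: "'a \<Rightarrow> real" and A :: "'a \<Rightarrow> nat \<Rightarrow> complex"
  assumes fin: "finite I"
    and lim: "\<And>N. (\<lambda>n. \<Sum>i\<in>I. complex_of_real (f i ^ N) * A i n) \<longlonglongrightarrow> 0"
  shows "(\<lambda>n. \<Sum>i\<in>I. (if f i = v then A i n else 0)) \<longlonglongrightarrow> 0"
proof -
  have gen: "\<forall>N. (\<lambda>n. \<Sum>i\<in>I. complex_of_real (f i ^ N * (\<Prod>w\<in>W. (f i - w))) * A i n) \<longlonglongrightarrow> 0"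
    if "finite W" for W
    using that
  proof (induction W rule: finite_induct)
    case empty
    then show ?case using lim by simp
  next
    case (insert w W)
    show ?case
    proof
      fix N
      have eq: "(\<lambda>n. \<Sum>i\<in>I. complex_of_real (f i ^ N * (\<Prod>x\<in>insert w W. (f i - x))) * A i n)
         = (\<lambda>n. (\<Sum>i\<in>I. complex_of_real (f i ^ Suc N * (\<Prod>x\<in>W. (f i - x))) * A i n)
              - of_real w * (\<Sum>i\<in>I. complex_of_real (f i ^ N * (\<Prod>x\<in>W. (f i - x))) * A i n))"
        using insert(1,2)
        by (simp add: sum_distrib_left sum_subtractf[symmetric] algebra_simps)
      show "(\<lambda>n. \<Sum>i\<in>I. complex_of_real (f i ^ N * (\<Prod>x\<in>insert w W. (f i - x))) * A i n) \<longlonglongrightarrow> 0"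
        unfolding eq using insert(3)
        by (metis (no_types) tendsto_diff tendsto_mult_right_zero diff_self)
    qed
  qed
  define W where "W = f ` I - {v}"
  have fW: "finite W" unfolding W_def using fin by simp
  define c where "c = (\<Prod>w\<in>W. (v - w))"
  have c0: "c \<noteq> 0" unfolding c_def W_def using fW W_def by (simp add: prod_zero_iff)
  have eq: "(\<lambda>n. \<Sum>i\<in>I. complex_of_real (f i ^ 0 * (\<Prod>w\<in>W. (f i - w))) * A i n)
      = (\<lambda>n. of_real c * (\<Sum>i\<in>I. (if f i = v then A i n else 0)))"
  proof
    fix n
    have "complex_of_real (f i ^ 0 * (\<Prod>w\<in>W. (f i - w))) * A i n = of_real c * (if f i = v then A i n else 0)"
      if i: "i \<in> I" for i
    proof (cases "f i = v")
      case True then show ?thesis unfolding c_def by simp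
    next
      case False
      then have "f i \<in> W" unfolding W_def using i by auto
      then have "(\<Prod>w\<in>W. (f i - w)) = 0" using fW by (simp add: prod_zero_iff)
      then show ?thesis using False by simp
    qed
    then show "(\<Sum>i\<in>I. complex_of_real (f i ^ 0 * (\<Prod>w\<in>W. (f i - w))) * A i n)
      = of_real c * (\<Sum>i\<in>I. (if f i = v then A i n else 0))"
      by (simp add: sum_distrib_left)
  qed
  have "(\<lambda>n. \<Sum>i\<in>I. complex_of_real (f i ^ 0 * (\<Prod>w\<in>W. (f i - w))) * A i n) \<longlonglongrightarrow> 0"
    using gen[OF fW] by blast
  then have "(\<lambda>n. of_real c * (\<Sum>i\<in>I. (if f i = v then A i n else 0))) \<longlonglongrightarrow> 0"
    unfolding eq .
  then have "(\<lambda>n. of_real (1 / c) * (of_real c * (\<Sum>i\<in>I. (if f i = v then A i n else 0)))) \<longlonglongrightarrow> 0"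
    by (rule tendsto_mult_right_zero)
  then show ?thesis using c0 by (simp add: field_simps)
qed

lemma comb:
  fixes I L :: "'a set" and f :: "'a \<Rightarrow> real" and B :: "'a \<Rightarrow> nat \<Rightarrow> complex"
  assumes fin: "finite I" and LI: "L \<subseteq> I" and c4: "card L \<le> 4"
    and zero: "\<And>i n. i \<in> I \<Longrightarrow> i \<notin> L \<Longrightarrow> B i n = 0"
    and nz: "\<And>i. i \<in> L \<Longrightarrow> \<not> (B i \<longlonglongrightarrow> 0)"
    and lim: "\<And>N. (\<lambda>n. \<Sum>i\<in>I. complex_of_real (f i ^ N) * B i n) \<longlonglongrightarrow> 0"
  shows "card L \<in> {0, 2, 3, 4}
     \<and> (card L \<in> {2, 3} \<longrightarrow> (\<exists>c. \<forall>i\<in>L. f i = c))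
     \<and> (card L = 4 \<longrightarrow> (\<exists>c. \<forall>i\<in>L. f i = c)
          \<or> (\<exists>L1 L2. L = L1 \<union> L2 \<and> card L1 = 2 \<and> card L2 = 2
               \<and> (\<forall>P\<in>{L1, L2}. (\<exists>c. \<forall>i\<in>P. f i = c)
                   \<and> (\<forall>N. (\<lambda>n. \<Sum>i\<in>P. complex_of_real (f i ^ N) * B i n) \<longlonglongrightarrow> 0))))"
proof -
  have finL: "finite L" using fin LI finite_subset by blast
  define G where "G v n = (\<Sum>i\<in>I. (if f i = v then B i n else 0))" for v n
  have G: "G v \<longlonglongrightarrow> 0" for v unfolding G_def[abs_def] by (rule group_lim[OF fin lim])
  have Gsub: "G v n = (\<Sum>i\<in>P. B i n)" if P: "P \<subseteq> I" "\<forall>i\<in>P. f i = v" "\<forall>i\<in>L - P. f i \<noteq> v" for P v n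
  proof -
    have "G v n = (\<Sum>i\<in>P. (if f i = v then B i n else 0))"
      unfolding G_def
    proof (rule sum.mono_neutral_right[OF fin P(1)], intro ballI)
      fix i assume i: "i \<in> I - P"
      show "(if f i = v then B i n else 0) = 0"
      proof (cases "i \<in> L")
        case True then show ?thesis using i P(3) by auto
      next
        case False then show ?thesis using i zero by auto
      qed
    qed
    also have "\<dots> = (\<Sum>i\<in>P. B i n)" using P(2) by simp
    finally show ?thesis .
  qed
  have pair: "\<exists>i'\<in>L. i' \<noteq> i \<and> f i' = f i" if i: "i \<in> L" for i
  proof (rule ccontr)
    assume "\<not> ?thesis"
    then have "G (f i) n = (\<Sum>x\<in>{i}. B x n)" for n
      using i LI by (intro Gsub) auto
    then have "G (f i) = B i" by auto
    then show False using G nz i by metis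
  qed
  have c1: "card L \<noteq> 1"
  proof
    assume "card L = 1"
    then obtain i where "L = {i}" by (auto simp: card_Suc_eq)
    then show False using pair[of i] by auto
  qed
  have nonconst: "card L = 4 \<and> (\<exists>L1 L2. L = L1 \<union> L2 \<and> card L1 = 2 \<and> card L2 = 2
               \<and> (\<forall>P\<in>{L1, L2}. (\<exists>c. \<forall>i\<in>P. f i = c)
                   \<and> (\<forall>N. (\<lambda>n. \<Sum>i\<in>P. complex_of_real (f i ^ N) * B i n) \<longlonglongrightarrow> 0)))"
    if nc: "\<not> (\<exists>c. \<forall>i\<in>L. f i = c)"
  proof -
    obtain i1 i2 where i12: "i1 \<in> L" "i2 \<in> L" "f i1 \<noteq> f i2"
      using nc by (metis (mono_tags) ex_in_conv)
    obtain i1' where i1': "i1' \<in> L" "i1' \<noteq> i1" "f i1' = f i1" using pair[OF i12(1)] by blast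
    obtain i2' where i2': "i2' \<in> L" "i2' \<noteq> i2" "f i2' = f i2" using pair[OF i12(2)] by blast
    define L1 where "L1 = {i1, i1'}"
    define L2 where "L2 = {i2, i2'}"
    have cL1: "card L1 = 2" unfolding L1_def using i1' by simp
    have cL2: "card L2 = 2" unfolding L2_def using i2' by simp
    have disj: "L1 \<inter> L2 = {}" unfolding L1_def L2_def using i12 i1' i2' by auto
    have cU: "card (L1 \<union> L2) = 4" using cL1 cL2 disj card_Un_disjoint[of L1 L2]
      unfolding L1_def L2_def by simp
    have sub: "L1 \<union> L2 \<subseteq> L" unfolding L1_def L2_def using i12 i1' i2' by auto
    have cL: "card L = 4" using card_mono[OF finL sub] cU c4 by simp
    have LU: "L = L1 \<union> L2" using card_subset_eq[OF finL sub] cU cL by simp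
    have part: "(\<exists>c. \<forall>i\<in>P. f i = c) \<and> (\<forall>N. (\<lambda>n. \<Sum>i\<in>P. complex_of_real (f i ^ N) * B i n) \<longlonglongrightarrow> 0)"
      if P: "P \<in> {L1, L2}" for P
    proof -
      have "\<exists>v. (\<forall>i\<in>P. f i = v) \<and> (\<forall>i\<in>L - P. f i \<noteq> v)"
      proof (cases "P = L1")
        case True
        have "\<forall>i\<in>L - P. f i \<noteq> f i1"
        proof
          fix i assume "i \<in> L - P"
          then have "i \<in> L2" using LU True by auto
          then show "f i \<noteq> f i1" unfolding L2_def using i12 i2' by auto
        qed
        moreover have "\<forall>i\<in>P. f i = f i1" using True i1' unfolding L1_def by auto
        ultimately show ?thesis by blast
      next
        case False
        then have F: "P = L2" using P by auto
        have "\<forall>i\<in>L - P. f i \<noteq> f i2"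
        proof
          fix i assume "i \<in> L - P"
          then have "i \<in> L1" using LU F by auto
          then show "f i \<noteq> f i2" unfolding L1_def using i12 i1' by auto
        qed
        moreover have "\<forall>i\<in>P. f i = f i2" using F i2' unfolding L2_def by auto
        ultimately show ?thesis by blast
      qed
      then obtain v where Pv: "\<forall>i\<in>P. f i = v" "\<forall>i\<in>L - P. f i \<noteq> v" by blast
      have PI: "P \<subseteq> I" using P LU LI by auto
      have "(\<lambda>n. \<Sum>i\<in>P. complex_of_real (f i ^ N) * B i n) \<longlonglongrightarrow> 0" for N
      proof -
        have "(\<lambda>n. \<Sum>i\<in>P. complex_of_real (f i ^ N) * B i n) = (\<lambda>n. complex_of_real (v ^ N) * G v n)"
          using Gsub[OF PI Pv] Pv(1) by (simp add: sum_distrib_left)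
        then show ?thesis using tendsto_mult_right_zero[OF G[of v]] by metis
      qed
      then show ?thesis using Pv by blast
    qed
    show ?thesis using cL LU cL1 cL2 part by blast
  qed
  have "card L \<in> {0, 2, 3, 4}" using c1 c4 by auto
  moreover have "card L \<in> {2, 3} \<longrightarrow> (\<exists>c. \<forall>i\<in>L. f i = c)"
    using nonconst by fastforce
  moreover have "card L = 4 \<longrightarrow> (\<exists>c. \<forall>i\<in>L. f i = c)
          \<or> (\<exists>L1 L2. L = L1 \<union> L2 \<and> card L1 = 2 \<and> card L2 = 2
               \<and> (\<forall>P\<in>{L1, L2}. (\<exists>c. \<forall>i\<in>P. f i = c)
                   \<and> (\<forall>N. (\<lambda>n. \<Sum>i\<in>P. complex_of_real (f i ^ N) * B i n) \<longlonglongrightarrow> 0)))"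
  proof (intro impI)
    show "(\<exists>c. \<forall>i\<in>L. f i = c)
          \<or> (\<exists>L1 L2. L = L1 \<union> L2 \<and> card L1 = 2 \<and> card L2 = 2
               \<and> (\<forall>P\<in>{L1, L2}. (\<exists>c. \<forall>i\<in>P. f i = c)
                   \<and> (\<forall>N. (\<lambda>n. \<Sum>i\<in>P. complex_of_real (f i ^ N) * B i n) \<longlonglongrightarrow> 0)))"
      using nonconst by blast
  qed
  ultimately show ?thesis by blast
qed



lemma conv_bd:
  assumes rho_pos: "\<And>t. \<rho> t > 0"
    and rho_d1: "\<And>t. (\<rho> has_real_derivative \<rho>' t) (at t)"
    and rho_d2: "\<And>t. (\<rho>' has_real_derivative \<rho>'' t) (at t)"
    and convex: "\<And>t. deriv (deriv (\<lambda>s. ln (\<rho> s))) t < sqrt q / (1 + sqrt q)"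
  shows "(\<rho>'' t * \<rho> t - \<rho>' t * \<rho>' t) / (\<rho> t)^2 < sqrt q / (1 + sqrt q)"
proof -
  have gd: "deriv (\<lambda>s. ln (\<rho> s)) = (\<lambda>t. \<rho>' t / \<rho> t)" by (rule ln_deriv_eq[OF rho_pos rho_d1])
  show ?thesis using convex[of t] unfolding gd
    using DERIV_imp_deriv[OF g_deriv[OF rho_pos rho_d1 rho_d2, of t]] by simp
qed

lemma summand_N:
  "summand q \<rho> \<phi> te N kn j l = complex_of_real (fval q \<rho> te j l ^ N) * summand q \<rho> \<phi> te 0 kn j l"
  unfolding summand_def Let_def by simp

lemma summand_norm:
  "norm (summand q \<rho> \<phi> te 0 kn j l) =
     norm (\<phi> (Tmap q \<rho> te j l + delta2 l * pi)) * \<bar>Psi q \<rho> te (Tmap q \<rho> te j l) (Tmap q \<rho> te j l + delta2 l * pi)\<bar>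
     / sqrt \<bar>detD2psi q \<rho> te (Tmap q \<rho> te j l) (Tmap q \<rho> te j l + delta2 l * pi)\<bar>"
  unfolding summand_def Let_def by (simp add: norm_mult norm_divide)

theorem lemma7:
  fixes q :: real and \<rho> \<rho>' \<rho>'' :: "real \<Rightarrow> real" and \<phi> :: "real \<Rightarrow> complex"
    and k :: "nat \<Rightarrow> real"
  assumes q: "q > 1"
    and rho_pos: "\<And>t. \<rho> t > 0"
    and rho_per: "\<And>t. \<rho> (t + 2 * pi) = \<rho> t"
    and rho_d1: "\<And>t. (\<rho> has_real_derivative \<rho>' t) (at t)"
    and rho_d2: "\<And>t. (\<rho>' has_real_derivative \<rho>'' t) (at t)"
    and rho_C2: "continuous_on UNIV \<rho>''"
    and convex: "\<And>t. deriv (deriv (\<lambda>s. ln (\<rho> s))) t < sqrt q / (1 + sqrt q)"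
    and phi_cont: "continuous_on UNIV \<phi>"
    and phi_per: "\<And>t. \<phi> (t + 2 * pi) = \<phi> t"
    and k_pos: "\<And>n. k n > 0"
    and k_lim: "filterlim k at_top sequentially"
    and vanish: "\<And>te N. (\<lambda>n. \<Sum>(j, l)\<in>{1, 2} \<times> {1, 2}. summand q \<rho> \<phi> te N (k n) j l)
                          \<longlonglongrightarrow> 0"
  shows "\<forall>te. card (Lambda q \<rho> \<phi> te) \<in> {0, 2, 3, 4}
           \<and> (card (Lambda q \<rho> \<phi> te) \<in> {2, 3} \<longrightarrow>
                (\<exists>c. \<forall>(j, l)\<in>Lambda q \<rho> \<phi> te. fval q \<rho> te j l = c))
           \<and> (card (Lambda q \<rho> \<phi> te) = 4 \<longrightarrow>
                (\<exists>c. \<forall>(j, l)\<in>Lambda q \<rho> \<phi> te. fval q \<rho> te j l = c)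
              \<or> (\<exists>\<Lambda>1 \<Lambda>2. Lambda q \<rho> \<phi> te = \<Lambda>1 \<union> \<Lambda>2 \<and> card \<Lambda>1 = 2 \<and> card \<Lambda>2 = 2
                   \<and> (\<forall>P\<in>{\<Lambda>1, \<Lambda>2}.
                        (\<exists>c. \<forall>(j, l)\<in>P. fval q \<rho> te j l = c)
                        \<and> (\<forall>N. (\<lambda>n. \<Sum>(j, l)\<in>P. summand q \<rho> \<phi> te N (k n) j l) \<longlonglongrightarrow> 0))))"
proof
  fix te
  define I :: "(nat \<times> nat) set" where "I = {1, 2} \<times> {1, 2}"
  define L where "L = Lambda q \<rho> \<phi> te"
  define f where "f = (\<lambda>(j, l). fval q \<rho> te j l)"
  define B where "B = (\<lambda>(j, l) n. summand q \<rho> \<phi> te 0 (k n) j l)"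
  have eqsum: "(\<Sum>i\<in>P. complex_of_real (f i ^ N) * B i n) = (\<Sum>(j, l)\<in>P. summand q \<rho> \<phi> te N (k n) j l)"
    for P N n
    unfolding f_def B_def by (rule sum.cong) (auto simp: summand_N[of q \<rho> \<phi> te N])
  have eqf: "(\<forall>i\<in>P. f i = c) \<longleftrightarrow> (\<forall>(j, l)\<in>P. fval q \<rho> te j l = c)" for P c
    unfolding f_def by auto
  have fin: "finite I" unfolding I_def by simp
  have LI: "L \<subseteq> I" unfolding L_def I_def Lambda_def by auto
  have c4: "card L \<le> 4"
  proof -
    have "card I = 4" unfolding I_def by (simp add: card_cartesian_product)
    then show ?thesis using card_mono[OF fin LI] by simp
  qed
  have zero: "B i n = 0" if "i \<in> I" "i \<notin> L" for i n
    using that unfolding B_def L_def Lambda_def I_def summand_def Let_def by auto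
  have nz: "\<not> (B i \<longlonglongrightarrow> 0)" if i: "i \<in> L" for i
  proof -
    obtain j l where ijl: "i = (j, l)" by (cases i)
    have jl: "j \<in> {1, 2}" "l \<in> {1, 2}" and ph: "\<phi> (Tmap q \<rho> te j l + delta2 l * pi) \<noteq> 0"
      using i unfolding ijl L_def Lambda_def by auto
    define T where "T = Tmap q \<rho> te j l"
    have TP: "\<rho>' T / \<rho> T = hfun q (T - ang_l te l)" "sqrt q * cos (T - ang_l te l) + 1 \<noteq> 0"
      using Tmap_prop[OF q rho_pos rho_d1 rho_d2 convex, of te j l] unfolding T_def by auto
    have Psi0: "Psi q \<rho> te T (T + delta2 l * pi) \<noteq> 0"
      unfolding Psi_formula[OF rho_d1 jl(2)] using Psi_nz[OF q rho_pos TP] by simp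
    have det0: "detD2psi q \<rho> te T (T + delta2 l * pi) \<noteq> 0"
      unfolding det_formula[OF rho_d1 rho_d2 jl(2)]
      using det_nz[OF q rho_pos TP conv_bd[OF rho_pos rho_d1 rho_d2 convex]] rho_pos[of T] by simp
    define C where "C = norm (\<phi> (T + delta2 l * pi)) * \<bar>Psi q \<rho> te T (T + delta2 l * pi)\<bar>
     / sqrt \<bar>detD2psi q \<rho> te T (T + delta2 l * pi)\<bar>"
    have Cpos: "C > 0" unfolding C_def using ph Psi0 det0 unfolding T_def by simp
    have nB: "(\<lambda>n. norm (B i n)) = (\<lambda>n. C)"
      unfolding B_def ijl C_def T_def by (simp add: summand_norm)
    show ?thesis
    proof
      assume "B i \<longlonglongrightarrow> 0"
      then have "(\<lambda>n. norm (B i n)) \<longlonglongrightarrow> 0" using tendsto_norm_zero by blast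
      then have "(\<lambda>n. C) \<longlonglongrightarrow> 0" unfolding nB .
      then have "C = 0" using LIMSEQ_const_iff by blast
      then show False using Cpos by simp
    qed
  qed
  have lim: "(\<lambda>n. \<Sum>i\<in>I. complex_of_real (f i ^ N) * B i n) \<longlonglongrightarrow> 0" for N
    unfolding eqsum I_def using vanish .
  note R = comb[OF fin LI c4 zero nz lim]
  show "card (Lambda q \<rho> \<phi> te) \<in> {0, 2, 3, 4}
           \<and> (card (Lambda q \<rho> \<phi> te) \<in> {2, 3} \<longrightarrow>
                (\<exists>c. \<forall>(j, l)\<in>Lambda q \<rho> \<phi> te. fval q \<rho> te j l = c))
           \<and> (card (Lambda q \<rho> \<phi> te) = 4 \<longrightarrow>
                (\<exists>c. \<forall>(j, l)\<in>Lambda q \<rho> \<phi> te. fval q \<rho> te j l = c)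
              \<or> (\<exists>\<Lambda>1 \<Lambda>2. Lambda q \<rho> \<phi> te = \<Lambda>1 \<union> \<Lambda>2 \<and> card \<Lambda>1 = 2 \<and> card \<Lambda>2 = 2
                   \<and> (\<forall>P\<in>{\<Lambda>1, \<Lambda>2}.
                        (\<exists>c. \<forall>(j, l)\<in>P. fval q \<rho> te j l = c)
                        \<and> (\<forall>N. (\<lambda>n. \<Sum>(j, l)\<in>P. summand q \<rho> \<phi> te N (k n) j l) \<longlonglongrightarrow> 0))))"
    using R unfolding eqsum eqf L_def .
qed

end
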